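(* Let $N'\ge2$ and let $\mu_1<0<\mu_2<\cdots<\mu_{N'}$ be real numbers. Let $\delta$ be a sufficiently small positive constant ($0<\delta\ll1$, in particular $\delta<\mu_2$) and let $0<a<1<b<c$ be constants. Define $$\bar x_1=\frac{b-1}{2b[-\mu_1+\delta]},\qquad \bar x_k(m)=\frac{\frac{c+m-1}{m}-a}{2a[\mu_k-\delta]}\quad(2\le k\le N',\ m\ge1).$$ Call admissible any choice of a nonempty set $S\subseteq\{2,\dots,N'\}$ with $m=|S|$, together with positive reals $x_1$ and $(x_k)_{k\in S}$ satisfying $x_1\le\bar x_1$ and $x_k\ge\bar x_k(m)$ for all $k\in S$; for such a choice set $\pi_1=\frac{x_1}{x_1+\sum_{k\in S}x_k}$. Then the maximum of $\pi_1$ over all admissible choices is $$\pi_1^*=\frac{\frac{b-1}{2b[-\mu_1+\delta]}}{\frac{b-1}{2b[-\mu_1+\delta]}+\frac{c-a}{2a[\mu_{N'}-\delta]}},$$ attained with $S=\{N'\}$, $x_1=\bar x_1$, $x_{N'}=\bar x_{N'}(1)$.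
   Context: Setting: graphs $G_1,\dots,G_{N'}$ on a common node set with adjacency matrices $A_l$, constant cure probability $\beta$ and infection probability $\gamma$; configuration $\mathcal C_l=(G_l,\beta,\gamma)$, $\mu_l=\beta-\gamma\lambda_1(A_l)$ where $\lambda_1(A)$ is the eigenvalue of largest modulus. $\mathcal C_1$ violates the epidemic threshold ($\mu_1<0$); $\mathcal C_2,\dots,\mathcal C_{N'}$ are moving-target-defense-induced configurations satisfying it. The defender switches between $\mathcal C_1$ and the configurations $\mathcal C_k$, $k\in S$, by a continuous-time Markov chain with generator $Q$; $x_l=1/(-q_{ll})$ is the expected sojourn time in $\mathcal C_l$ and $\pi_l=x_l/\sum_p x_p$ the portion of time in $\mathcal C_l$. The bounds $x_1\le\bar x_1$, $x_k\ge\bar x_k(m)$ are exactly the sojourn-time conditions of a sufficient almost-sure convergence criterion (with one violating configuration and $m+1$ configurations in total), in which $\delta,a,b,c$ are constants such that there exist symmetric positive definite matrices $P_l$ with $aI<P_k<I$ for the satisfying configurations, $bI<P_1<cI$, and $\{P_l[\gamma A_l-\beta I]\}^s\le[\gamma\lambda_1(A_l)-\beta+\delta/2]P_l$. Thus $\pi_1^*$ is the maximal portion of time the system can stay in $\mathcal C_1$ under this criterion. *)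

theory Defs
  imports "HOL-Analysis.Analysis"
begin

definition xbar1 :: "real \<Rightarrow> real \<Rightarrow> real \<Rightarrow> real" where
  "xbar1 b \<mu>1 \<delta> = (b - 1) / (2 * b * (- \<mu>1 + \<delta>))"

definition xbark :: "real \<Rightarrow> real \<Rightarrow> real \<Rightarrow> real \<Rightarrow> nat \<Rightarrow> real" where
  "xbark a c \<mu>k \<delta> m = ((c + real m - 1) / real m - a) / (2 * a * (\<mu>k - \<delta>))"

definition admissible_pi1 ::
  "nat \<Rightarrow> (nat \<Rightarrow> real) \<Rightarrow> real \<Rightarrow> real \<Rightarrow> real \<Rightarrow> real \<Rightarrow> real set" where
  "admissible_pi1 N' \<mu> \<delta> a b c =
     {x 1 / (x 1 + (\<Sum>k\<in>S. x k)) | S x.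
        S \<noteq> {} \<and> S \<subseteq> {2..N'} \<and> x 1 > 0 \<and> (\<forall>k\<in>S. x k > 0) \<and>
        x 1 \<le> xbar1 b (\<mu> 1) \<delta> \<and>
        (\<forall>k\<in>S. x k \<ge> xbark a c (\<mu> k) \<delta> (card S))}"

end

theory Submission
  imports Defs
begin

lemma mono_mu:
  fixes \<mu> :: "nat \<Rightarrow> real"
  assumes "\<And>k. 2 \<le> k \<Longrightarrow> k < N' \<Longrightarrow> \<mu> k < \<mu> (Suc k)"
  shows "2 \<le> j \<Longrightarrow> j \<le> k \<Longrightarrow> k \<le> N' \<Longrightarrow> \<mu> j \<le> \<mu> k"
proof (induction k)
  case 0 then show ?case by simp
next
  case (Suc k)
  show ?case
  proof (cases "j = Suc k")
    case True then show ?thesis by simp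
  next
    case False
    then have "j \<le> k" using Suc by simp
    then have "\<mu> j \<le> \<mu> k" using Suc by simp
    also have "\<mu> k < \<mu> (Suc k)" using assms[of k] Suc \<open>j \<le> k\<close> by simp
    finally show ?thesis by simp
  qed
qed

theorem theorem5:
  fixes N' :: nat and \<mu> :: "nat \<Rightarrow> real" and \<delta> a b c :: real
  assumes "N' \<ge> 2"
    and "\<mu> 1 < 0" and "0 < \<mu> 2"
    and "\<And>k. 2 \<le> k \<Longrightarrow> k < N' \<Longrightarrow> \<mu> k < \<mu> (Suc k)"
    and "0 < \<delta>" and "\<delta> < \<mu> 2"
    and "0 < a" and "a < 1" and "1 < b" and "b < c"
  shows "(let pstar = ((b - 1) / (2 * b * (- \<mu> 1 + \<delta>))) /
            ((b - 1) / (2 * b * (- \<mu> 1 + \<delta>)) + (c - a) / (2 * a * (\<mu> N' - \<delta>)))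
         in pstar \<in> admissible_pi1 N' \<mu> \<delta> a b c \<and>
            (\<forall>p\<in>admissible_pi1 N' \<mu> \<delta> a b c. p \<le> pstar) \<and>
            0 < xbar1 b (\<mu> 1) \<delta> \<and> 0 < xbark a c (\<mu> N') \<delta> 1 \<and>
            xbar1 b (\<mu> 1) \<delta> / (xbar1 b (\<mu> 1) \<delta> + (\<Sum>k\<in>{N'}. xbark a c (\<mu> k) \<delta> (card {N'}))) = pstar)"
proof -
  define X where "X = xbar1 b (\<mu> 1) \<delta>"
  define D where "D = \<mu> N' - \<delta>"
  define T where "T = (c - a) / (2 * a * D)"
  have mono: "\<And>j k. 2 \<le> j \<Longrightarrow> j \<le> k \<Longrightarrow> k \<le> N' \<Longrightarrow> \<mu> j \<le> \<mu> k"
    using mono_mu[of N' \<mu>] assms(4) by blast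
  have D: "D > 0" using mono[of 2 N'] assms unfolding D_def by simp
  have Xpos: "X > 0" unfolding X_def xbar1_def using assms by (intro divide_pos_pos) auto
  have Tpos: "T > 0" unfolding T_def using assms D by (intro divide_pos_pos) auto
  have Xeq: "(b - 1) / (2 * b * (- \<mu> 1 + \<delta>)) = X" unfolding X_def xbar1_def by simp
  have xk1: "xbark a c (\<mu> N') \<delta> 1 = T" unfolding xbark_def T_def D_def by simp
  have N1: "N' \<noteq> 1" using assms by simp
  have mem: "X / (X + T) \<in> admissible_pi1 N' \<mu> \<delta> a b c"
  proof -
    define x :: "nat \<Rightarrow> real" where "x = (\<lambda>i. if i = 1 then X else T)"
    have "X / (X + T) = x 1 / (x 1 + (\<Sum>k\<in>{N'}. x k))" using N1 by (simp add: x_def)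
    moreover have "{N'} \<noteq> {} \<and> {N'} \<subseteq> {2..N'} \<and> x 1 > 0 \<and> (\<forall>k\<in>{N'}. x k > 0) \<and>
        x 1 \<le> xbar1 b (\<mu> 1) \<delta> \<and> (\<forall>k\<in>{N'}. x k \<ge> xbark a c (\<mu> k) \<delta> (card {N'}))"
      using N1 assms Xpos Tpos xk1 by (auto simp: x_def X_def)
    ultimately show ?thesis unfolding admissible_pi1_def by blast
  qed
  have bound: "p \<le> X / (X + T)" if pin: "p \<in> admissible_pi1 N' \<mu> \<delta> a b c" for p
  proof -
    obtain S :: "nat set" and x :: "nat \<Rightarrow> real" where p: "p = x 1 / (x 1 + (\<Sum>k\<in>S. x k))" and S: "S \<noteq> {}" "S \<subseteq> {2..N'}"
      and x1: "x 1 > 0" and x1': "x 1 \<le> xbar1 b (\<mu> 1) \<delta>" and xk: "\<forall>k\<in>S. x k \<ge> xbark a c (\<mu> k) \<delta> (card S)"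
      using pin unfolding admissible_pi1_def by blast
    have x1X: "x 1 \<le> X" using x1' X_def by simp
    define m where "m = card S"
    have fin: "finite S" using S finite_subset by blast
    have m1: "real m \<ge> 1" using S fin unfolding m_def by (simp add: Suc_leI card_gt_0_iff)
    define num where "num = (c - 1) / real m + 1 - a"
    have num: "num > 0" unfolding num_def using assms m1 by (smt (verit) divide_nonneg_pos)
    have each: "x k \<ge> num / (2 * a * D)" if "k \<in> S" for k
    proof -
      have k: "2 \<le> k" "k \<le> N'" using S that by auto
      have dk: "0 < \<mu> k - \<delta>" "\<mu> k - \<delta> \<le> D" using mono[of 2 k] mono[of k N'] k assms
        unfolding D_def by auto
      have "xbark a c (\<mu> k) \<delta> m = num / (2 * a * (\<mu> k - \<delta>))"
        unfolding xbark_def num_def using m1 by (simp add: field_simps)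
      also have "\<dots> \<ge> num / (2 * a * D)"
        using num dk assms by (intro divide_left_mono mult_left_mono) auto
      finally show ?thesis using xk that m_def by auto
    qed
    have mr0: "1 * (1 - a) \<le> real m * (1 - a)" using m1 assms by (intro mult_right_mono) auto
    have mr: "c - a \<le> c - 1 + real m * (1 - a)" using mr0 by simp
    have "(\<Sum>k\<in>S. x k) \<ge> (\<Sum>k\<in>S. num / (2 * a * D))" using each by (intro sum_mono) auto
    also have "(\<Sum>k\<in>S. num / (2 * a * D)) = real m * num / (2 * a * D)" by (simp add: m_def)
    also have "real m * num = c - 1 + real m * (1 - a)" unfolding num_def using m1 by (simp add: field_simps)
    also have "(c - 1 + real m * (1 - a)) / (2 * a * D) \<ge> T" unfolding T_def
      using m1 assms D by (intro divide_right_mono) (auto simp: mr)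
    finally have sT: "(\<Sum>k\<in>S. x k) \<ge> T" .
    have "p \<le> x 1 / (x 1 + T)" unfolding p using x1 x1X sT Tpos by (intro divide_left_mono) auto
    also have "\<dots> \<le> X / (X + T)" using x1 x1X Tpos by (simp add: field_simps mult_right_mono)
    finally show ?thesis .
  qed
  show ?thesis
    unfolding Let_def Xeq D_def[symmetric] T_def[symmetric]
    using mem bound Xpos Tpos xk1 X_def by simp
qed

end
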